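(* Let $G$ be a connected partial cube and let $E_1,\ldots,E_d$ be its $\Theta$-classes. For $k\in\{1,\ldots,d\}$ let $U$ and $U'$ be the two connected components of $G-E_k$, and for $e,f\in E(G)$ set $\delta_k(e,f)=1$ if ($e\in E(U)$ and $f\in E(U')$) or ($e\in E(U')$ and $f\in E(U)$), and $\delta_k(e,f)=0$ otherwise. Then for all $e,f\in E(G)$, $$\widehat{d}(e,f)=\sum_{k=1}^{d}\delta_k(e,f).$$
   Context: A partial cube is a graph isomorphic to an isometric subgraph of a hypercube $Q_n$ (i.e. distances in the subgraph equal distances in $Q_n$). The Djoković–Winkler relation $\Theta$ on $E(G)$ is defined by: $xy\,\Theta\,uv$ iff $d(x,u)+d(y,v)\neq d(x,v)+d(y,u)$, where $d$ is the shortest-path distance. In a partial cube $\Theta$ is an equivalence relation; its classes are the $\Theta$-classes, and for each $\Theta$-class $E_k$ the graph $G-E_k$ has exactly two connected components. For edges $e=ab$ and $f=xy$, $\widehat{d}(e,f)=\min\{d(a,x),d(a,y),d(b,x),d(b,y)\}$. *)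

theory Defs
  imports Main
begin

definition simple_graph :: "'a set \<Rightarrow> 'a set set \<Rightarrow> bool" where
  "simple_graph V E \<longleftrightarrow> finite V \<and>
     (\<forall>e\<in>E. \<exists>x y. x \<noteq> y \<and> x \<in> V \<and> y \<in> V \<and> e = {x, y})"

definition is_walk :: "'a set \<Rightarrow> 'a set set \<Rightarrow> 'a list \<Rightarrow> bool" where
  "is_walk V E xs \<longleftrightarrow> xs \<noteq> [] \<and> set xs \<subseteq> V \<and>
     (\<forall>i. Suc i < length xs \<longrightarrow> {xs ! i, xs ! Suc i} \<in> E)"

definition reachable :: "'a set \<Rightarrow> 'a set set \<Rightarrow> 'a \<Rightarrow> 'a \<Rightarrow> bool" where
  "reachable V E u v \<longleftrightarrow> (\<exists>xs. is_walk V E xs \<and> hd xs = u \<and> last xs = v)"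

definition connected_graph :: "'a set \<Rightarrow> 'a set set \<Rightarrow> bool" where
  "connected_graph V E \<longleftrightarrow> (\<forall>u\<in>V. \<forall>v\<in>V. reachable V E u v)"

definition gdist :: "'a set \<Rightarrow> 'a set set \<Rightarrow> 'a \<Rightarrow> 'a \<Rightarrow> nat" where
  "gdist V E u v = (LEAST n. \<exists>xs. is_walk V E xs \<and> hd xs = u \<and> last xs = v \<and> length xs = Suc n)"

text \<open>Partial cube: isometric embedding into a hypercube Q_n, whose vertices are the
  subsets of {0..<n} and whose distance is the Hamming distance (size of symmetric difference).\<close>
definition partial_cube :: "'a set \<Rightarrow> 'a set set \<Rightarrow> bool" where
  "partial_cube V E \<longleftrightarrow> simple_graph V E \<and>
     (\<exists>(n::nat) (\<phi>::'a \<Rightarrow> nat set). (\<forall>v\<in>V. \<phi> v \<subseteq> {..<n}) \<and>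
        (\<forall>u\<in>V. \<forall>v\<in>V. gdist V E u v = card ((\<phi> u - \<phi> v) \<union> (\<phi> v - \<phi> u))))"

definition Theta :: "'a set \<Rightarrow> 'a set set \<Rightarrow> 'a set \<Rightarrow> 'a set \<Rightarrow> bool" where
  "Theta V E e f \<longleftrightarrow> (\<exists>x y u v. e = {x, y} \<and> f = {u, v} \<and>
     gdist V E x u + gdist V E y v \<noteq> gdist V E x v + gdist V E y u)"

definition Theta_classes :: "'a set \<Rightarrow> 'a set set \<Rightarrow> 'a set set set" where
  "Theta_classes V E = E // {(e, f). e \<in> E \<and> f \<in> E \<and> Theta V E e f}"

definition components :: "'a set \<Rightarrow> 'a set set \<Rightarrow> 'a set set" where
  "components V E = {{v \<in> V. reachable V E u v} | u. u \<in> V}"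

definition delta :: "'a set \<Rightarrow> 'a set set \<Rightarrow> 'a set set \<Rightarrow> 'a set \<Rightarrow> 'a set \<Rightarrow> nat" where
  "delta V E F e f = (if \<exists>U\<in>components V (E - F). \<exists>U'\<in>components V (E - F).
        U \<noteq> U' \<and> e \<in> E - F \<and> e \<subseteq> U \<and> f \<in> E - F \<and> f \<subseteq> U' then 1 else 0)"

definition edge_dist :: "'a set \<Rightarrow> 'a set set \<Rightarrow> 'a set \<Rightarrow> 'a set \<Rightarrow> nat" where
  "edge_dist V E e f = Min {gdist V E a x | a x. a \<in> e \<and> x \<in> f}"

end

theory Submission
  imports Defs
begin


lemma is_walk_single[simp]: "is_walk V E [x] \<longleftrightarrow> x \<in> V"
  by (simp add: is_walk_def)

lemma is_walk_Cons2: "is_walk V E (x#y#ys) \<longleftrightarrow> x \<in> V \<and> {x,y} \<in> E \<and> is_walk V E (y#ys)"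
proof
  assume h: "is_walk V E (x#y#ys)"
  have w: "\<And>i. Suc i < length (x#y#ys) \<Longrightarrow> {(x#y#ys) ! i, (x#y#ys) ! Suc i} \<in> E"
    using h unfolding is_walk_def by blast
  have "{x,y} \<in> E" using w[of 0] by simp
  moreover have "\<forall>i. Suc i < length (y#ys) \<longrightarrow> {(y#ys) ! i, (y#ys) ! Suc i} \<in> E"
    using w by (intro allI impI) (drule_tac x="Suc i" in meta_spec, simp)
  ultimately show "x \<in> V \<and> {x,y} \<in> E \<and> is_walk V E (y#ys)" using h unfolding is_walk_def by auto
next
  assume h: "x \<in> V \<and> {x,y} \<in> E \<and> is_walk V E (y#ys)"
  show "is_walk V E (x#y#ys)" unfolding is_walk_def
  proof (intro conjI allI impI)
    fix i assume i: "Suc i < length (x#y#ys)"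
    show "{(x#y#ys) ! i, (x#y#ys) ! Suc i} \<in> E"
    proof (cases i)
      case 0 then show ?thesis using h by simp
    next
      case (Suc j) then show ?thesis using h i unfolding is_walk_def by simp
    qed
  qed (use h in \<open>auto simp: is_walk_def\<close>)
qed

definition adj :: "'a set \<Rightarrow> 'a set set \<Rightarrow> 'a \<Rightarrow> 'a \<Rightarrow> bool" where
  "adj V E x y \<longleftrightarrow> x \<in> V \<and> y \<in> V \<and> {x,y} \<in> E"

lemma walk_rtc: "is_walk V E xs \<Longrightarrow> (adj V E)\<^sup>*\<^sup>* (hd xs) (last xs)"
proof (induction xs)
  case Nil then show ?case by (simp add: is_walk_def)
next
  case (Cons x xs)
  show ?case
  proof (cases xs)
    case Nil then show ?thesis by simp
  next
    case (Cons y ys)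
    with Cons.prems have h: "x \<in> V \<and> {x,y} \<in> E \<and> is_walk V E (y#ys)" by (simp add: is_walk_Cons2)
    then have "y \<in> V" by (simp add: is_walk_def)
    with h have "adj V E x y" by (simp add: adj_def)
    moreover have "(adj V E)\<^sup>*\<^sup>* y (last (y#ys))" using Cons.IH h Cons by simp
    ultimately show ?thesis using Cons by simp
  qed
qed

lemma rtc_walk: "(adj V E)\<^sup>*\<^sup>* u v \<Longrightarrow> u \<in> V \<Longrightarrow> \<exists>xs. is_walk V E xs \<and> hd xs = u \<and> last xs = v"
proof (induction rule: converse_rtranclp_induct)
  case base then show ?case by (intro exI[of _ "[v]"]) simp
next
  case (step u w)
  then have "w \<in> V" "{u,w} \<in> E" by (auto simp: adj_def)
  then obtain xs where xs: "is_walk V E xs" "hd xs = w" "last xs = v" using step by auto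
  then obtain ys where "xs = w # ys" by (cases xs) (auto simp: is_walk_def)
  then show ?case using xs step.prems \<open>{u,w} \<in> E\<close>
    by (intro exI[of _ "u # xs"]) (auto simp: is_walk_Cons2)
qed

lemma reachable_iff: "reachable V E u v \<longleftrightarrow> u \<in> V \<and> (adj V E)\<^sup>*\<^sup>* u v"
proof
  assume "reachable V E u v"
  then obtain xs where xs: "is_walk V E xs" "hd xs = u" "last xs = v" by (auto simp: reachable_def)
  then have "u \<in> V" by (cases xs) (auto simp: is_walk_def)
  then show "u \<in> V \<and> (adj V E)\<^sup>*\<^sup>* u v" using walk_rtc[OF xs(1)] xs by simp
next
  assume "u \<in> V \<and> (adj V E)\<^sup>*\<^sup>* u v"
  then show "reachable V E u v" using rtc_walk unfolding reachable_def by metis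
qed

lemma rtc_in_V: "(adj V E)\<^sup>*\<^sup>* u v \<Longrightarrow> u \<in> V \<Longrightarrow> v \<in> V"
  by (induction rule: rtranclp_induct) (auto simp: adj_def)



definition hdiff :: "('a \<Rightarrow> nat set) \<Rightarrow> 'a \<Rightarrow> 'a \<Rightarrow> nat set" where
  "hdiff \<phi> u v = (\<phi> u - \<phi> v) \<union> (\<phi> v - \<phi> u)"

definition cc :: "('a \<Rightarrow> nat set) \<Rightarrow> 'a set \<Rightarrow> nat" where
  "cc \<phi> e = the_elem (\<Union>(\<phi> ` e) - \<Inter>(\<phi> ` e))"

lemma hdiff_sym: "hdiff \<phi> u v = hdiff \<phi> v u" by (auto simp: hdiff_def)

lemma card_toggle: "finite A \<Longrightarrow> int (card ((A - {t}) \<union> ({t} - A))) = int (card A) + (if t \<in> A then -1 else 1)"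
proof (cases "t \<in> A")
  case True
  then have "(A - {t}) \<union> ({t} - A) = A - {t}" by auto
  moreover assume "finite A"
  ultimately show ?thesis using True card.remove[of A t] by simp
next
  case False
  then have "(A - {t}) \<union> ({t} - A) = insert t A" by auto
  moreover assume "finite A"
  ultimately show ?thesis using False by simp
qed

lemma arith_key:
  fixes P Q R S :: "nat set"
  assumes fin: "finite P" "finite Q" "finite R" "finite S"
    and J: "(P - Q) \<union> (Q - P) \<subseteq> {j}" and K: "(R - S) \<union> (S - R) \<subseteq> {k}"
  shows "j \<noteq> k \<Longrightarrow> card ((P - R) \<union> (R - P)) + card ((Q - S) \<union> (S - Q)) = card ((P - S) \<union> (S - P)) + card ((Q - R) \<union> (R - Q))"
    and "(P - Q) \<union> (Q - P) = {j} \<Longrightarrow> (R - S) \<union> (S - R) = {j} \<Longrightarrow> card ((P - R) \<union> (R - P)) + card ((Q - S) \<union> (S - Q)) \<noteq> card ((P - S) \<union> (S - P)) + card ((Q - R) \<union> (R - Q))"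
proof -
  define A where "A = (P - R) \<union> (R - P)"
  have fA: "finite A" using fin by (simp add: A_def)
  define tg where "tg X t = (X - {t}) \<union> ({t} - X)" for X :: "nat set" and t
  have ftg: "finite X \<Longrightarrow> finite (tg X t)" for X t by (simp add: tg_def)
  have ct: "finite X \<Longrightarrow> int (card (tg X t)) = int (card X) + (if t \<in> X then -1 else 1)" for X t
    unfolding tg_def by (rule card_toggle)
  have Jc: "Q = P \<or> Q = tg P j"
  proof -
    from J have "(P - Q) \<union> (Q - P) = {} \<or> (P - Q) \<union> (Q - P) = {j}" by (simp add: subset_singleton_iff)
    then show ?thesis
    proof
      assume "(P - Q) \<union> (Q - P) = {}" then have "Q = P" by blast then show ?thesis ..
    next
      assume h: "(P - Q) \<union> (Q - P) = {j}" have "Q = tg P j" unfolding tg_def using h by blast then show ?thesis ..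
    qed
  qed
  have Kc: "S = R \<or> S = tg R k"
  proof -
    from K have "(R - S) \<union> (S - R) = {} \<or> (R - S) \<union> (S - R) = {k}" by (simp add: subset_singleton_iff)
    then show ?thesis
    proof
      assume "(R - S) \<union> (S - R) = {}" then have "S = R" by blast then show ?thesis ..
    next
      assume h: "(R - S) \<union> (S - R) = {k}" have "S = tg R k" unfolding tg_def using h by blast then show ?thesis ..
    qed
  qed
  have e1: "(P - S) \<union> (S - P) = tg A t" if "S = tg R t" for t using that by (auto simp: A_def tg_def)
  have e2: "(Q - R) \<union> (R - Q) = tg A t" if "Q = tg P t" for t using that by (auto simp: A_def tg_def)
  have e3: "(Q - S) \<union> (S - Q) = tg (tg A t) t'" if "Q = tg P t" "S = tg R t'" for t t' using that by (auto simp: A_def tg_def)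
  show "j \<noteq> k \<Longrightarrow> card ((P - R) \<union> (R - P)) + card ((Q - S) \<union> (S - Q)) = card ((P - S) \<union> (S - P)) + card ((Q - R) \<union> (R - Q))"
  proof -
    assume jk: "j \<noteq> k"
    have kk: "k \<in> tg A j \<longleftrightarrow> k \<in> A" using jk by (auto simp: tg_def)
    from Jc Kc show ?thesis
    proof (elim disjE)
      assume "Q = P" "S = R" then show ?thesis by (simp add: Un_commute)
    next
      assume a: "Q = P" "S = tg R k"
      have "(Q - S) \<union> (S - Q) = (P - S) \<union> (S - P)" "(Q - R) \<union> (R - Q) = (P - R) \<union> (R - P)" using a(1) by simp_all
      then show ?thesis by simp
    next
      assume a: "Q = tg P j" "S = R"
      have "(Q - S) \<union> (S - Q) = (Q - R) \<union> (R - Q)" "(P - S) \<union> (S - P) = (P - R) \<union> (R - P)" using a(2) by simp_all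
      then show ?thesis by simp
    next
      assume q: "Q = tg P j" and s: "S = tg R k"
      have "int (card (tg (tg A j) k)) + int (card A) = int (card (tg A k)) + int (card (tg A j))"
        using ct[OF fA, of j] ct[OF fA, of k] ct[of "tg A j" k, OF ftg[OF fA]] kk by auto
      then show ?thesis using e1[OF s] e2[OF q] e3[OF q s] by (simp add: A_def)
    qed
  qed
  show "(P - Q) \<union> (Q - P) = {j} \<Longrightarrow> (R - S) \<union> (S - R) = {j} \<Longrightarrow> card ((P - R) \<union> (R - P)) + card ((Q - S) \<union> (S - Q)) \<noteq> card ((P - S) \<union> (S - P)) + card ((Q - R) \<union> (R - Q))"
  proof -
    assume a1: "(P - Q) \<union> (Q - P) = {j}" and a2: "(R - S) \<union> (S - R) = {j}"
    have q: "Q = tg P j" using a1 unfolding tg_def by blast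
    have s: "S = tg R j" using a2 unfolding tg_def by blast
    have "tg (tg A j) j = A" by (auto simp: tg_def)
    moreover have "int (card (tg A j)) \<noteq> int (card A)" using ct[OF fA, of j] by auto
    ultimately show ?thesis using e1[OF s] e2[OF q] e3[OF q s] by (simp add: A_def)
  qed
qed



locale pc =
  fixes V :: "'a set" and E :: "'a set set" and \<phi> :: "'a \<Rightarrow> nat set"
  assumes sg: "simple_graph V E" and conn: "connected_graph V E"
    and dist: "\<And>u v. u \<in> V \<Longrightarrow> v \<in> V \<Longrightarrow> gdist V E u v = card (hdiff \<phi> u v)"
    and fin: "\<And>v. v \<in> V \<Longrightarrow> finite (\<phi> v)"
begin

abbreviation H where "H \<equiv> hdiff \<phi>"

lemma finH: "u \<in> V \<Longrightarrow> v \<in> V \<Longrightarrow> finite (H u v)"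
  using fin by (simp add: hdiff_def)

lemma edge_shape: "e \<in> E \<Longrightarrow> \<exists>x y. x \<noteq> y \<and> x \<in> V \<and> y \<in> V \<and> e = {x, y}"
  using sg by (simp add: simple_graph_def)

lemma E_sub: "e \<in> E \<Longrightarrow> e \<subseteq> V" using edge_shape by blast

lemma finE: "finite E"
proof -
  have "E \<subseteq> Pow V" using E_sub by blast
  moreover have "finite V" using sg by (simp add: simple_graph_def)
  ultimately show ?thesis by (meson finite_Pow_iff finite_subset)
qed

lemma gdist_edge: assumes "{x,y} \<in> E" "x \<noteq> y" "x \<in> V" "y \<in> V" shows "gdist V E x y = 1"
proof -
  let ?P = "\<lambda>m. \<exists>xs. is_walk V E xs \<and> hd xs = x \<and> last xs = y \<and> length xs = Suc m"
  have w: "is_walk V E [x,y]" using assms by (simp add: is_walk_Cons2)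
  have p1: "?P 1" by (rule exI[of _ "[x,y]"]) (use w in simp)
  have le: "gdist V E x y \<le> 1" unfolding gdist_def by (rule Least_le) (rule p1)
  have "?P (gdist V E x y)" unfolding gdist_def by (rule LeastI_ex) (use p1 in blast)
  then obtain xs where xs: "is_walk V E xs" "hd xs = x" "last xs = y" "length xs = Suc (gdist V E x y)" by blast
  have "gdist V E x y \<noteq> 0"
  proof
    assume "gdist V E x y = 0"
    then have "length xs = 1" using xs by simp
    then obtain z where "xs = [z]" by (cases xs) auto
    then show False using xs assms by simp
  qed
  then show ?thesis using le by simp
qed

lemma H_pair: "\<Union>(\<phi> ` {x,y}) - \<Inter>(\<phi> ` {x,y}) = H x y" by (auto simp: hdiff_def)

lemma edge_H: assumes "{a,b} \<in> E" "a \<noteq> b" shows "H a b = {cc \<phi> {a,b}}"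
proof -
  have ab: "a \<in> V" "b \<in> V" using E_sub[OF assms(1)] by auto
  have "card (H a b) = 1" using gdist_edge[OF assms ab] dist[OF ab] by simp
  then obtain j where j: "H a b = {j}" by (rule card_1_singletonE)
  then have "cc \<phi> {a,b} = j" unfolding cc_def H_pair by simp
  then show ?thesis using j by simp
qed

lemma two_elem: "e = {x0,y0} \<Longrightarrow> x \<in> e \<Longrightarrow> y \<in> e \<Longrightarrow> x \<noteq> y \<Longrightarrow> e = {x,y}" by auto

lemma edge_sub: assumes "e \<in> E" "a \<in> e" "b \<in> e" shows "H a b \<subseteq> {cc \<phi> e}"
proof (cases "a = b")
  case True then show ?thesis by (simp add: hdiff_def)
next
  case False
  obtain x y where xy: "e = {x,y}" using edge_shape[OF assms(1)] by blast
  have "e = {a,b}" by (rule two_elem[OF xy assms(2,3) False])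
  then show ?thesis using edge_H[of a b] assms(1) False by simp
qed

lemma edge_exists: assumes "e \<in> E" shows "\<exists>a\<in>e. \<exists>b\<in>e. H a b = {cc \<phi> e}"
proof -
  obtain x y where xy: "x \<noteq> y" "e = {x,y}" using edge_shape[OF assms(1)] by blast
  have "H x y = {cc \<phi> e}" using edge_H[of x y] xy assms by simp
  moreover have "x \<in> e" "y \<in> e" using xy by auto
  ultimately show ?thesis by blast
qed

lemma edge_choose: assumes "e \<in> E" shows "\<exists>a\<in>e. (cc \<phi> e \<in> \<phi> a) = \<beta>"
proof -
  obtain a b where ab: "a \<in> e" "b \<in> e" "H a b = {cc \<phi> e}" using edge_exists[OF assms] by blast
  then have "cc \<phi> e \<in> H a b" by simp
  then have "(cc \<phi> e \<in> \<phi> a) \<noteq> (cc \<phi> e \<in> \<phi> b)" unfolding hdiff_def by blast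
  then show ?thesis using ab by (cases \<beta>) auto
qed

lemma edge_const: assumes "e \<in> E"
  shows "cc \<phi> e \<noteq> i \<longleftrightarrow> (\<forall>a\<in>e. \<forall>b\<in>e. (i \<in> \<phi> a) = (i \<in> \<phi> b))"
proof
  assume ne: "cc \<phi> e \<noteq> i"
  show "\<forall>a\<in>e. \<forall>b\<in>e. (i \<in> \<phi> a) = (i \<in> \<phi> b)"
  proof (intro ballI)
    fix a b assume "a \<in> e" "b \<in> e"
    then have "H a b \<subseteq> {cc \<phi> e}" by (rule edge_sub[OF assms])
    then have "i \<notin> H a b" using ne by blast
    then show "(i \<in> \<phi> a) = (i \<in> \<phi> b)" unfolding hdiff_def by blast
  qed
next
  assume h: "\<forall>a\<in>e. \<forall>b\<in>e. (i \<in> \<phi> a) = (i \<in> \<phi> b)"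
  obtain a b where ab: "a \<in> e" "b \<in> e" "H a b = {cc \<phi> e}" using edge_exists[OF assms] by blast
  show "cc \<phi> e \<noteq> i"
  proof
    assume "cc \<phi> e = i"
    then have "i \<in> H a b" using ab by simp
    moreover have "(i \<in> \<phi> a) = (i \<in> \<phi> b)" using h ab by blast
    ultimately show False unfolding hdiff_def by blast
  qed
qed

lemma Theta_iff: assumes "e \<in> E" "f \<in> E" shows "Theta V E e f \<longleftrightarrow> cc \<phi> e = cc \<phi> f"
proof
  assume "Theta V E e f"
  then obtain x y u v where t: "e = {x,y}" "f = {u,v}"
    "gdist V E x u + gdist V E y v \<noteq> gdist V E x v + gdist V E y u" unfolding Theta_def by blast
  have V: "x \<in> V" "y \<in> V" "u \<in> V" "v \<in> V" using E_sub assms t by auto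
  show "cc \<phi> e = cc \<phi> f"
  proof (rule ccontr)
    assume ne: "cc \<phi> e \<noteq> cc \<phi> f"
    have "H x y \<subseteq> {cc \<phi> e}" using edge_sub assms t by auto
    moreover have "H u v \<subseteq> {cc \<phi> f}" using edge_sub assms t by auto
    ultimately have "card (H x u) + card (H y v) = card (H x v) + card (H y u)"
      unfolding hdiff_def by (intro arith_key(1)[of "\<phi> x" "\<phi> y" "\<phi> u" "\<phi> v" "cc \<phi> e" "cc \<phi> f"] fin V ne) (simp_all add: hdiff_def)
    then show False using t(3) dist[OF V(1) V(3)] dist[OF V(2) V(4)] dist[OF V(1) V(4)] dist[OF V(2) V(3)] by simp
  qed
next
  assume eq: "cc \<phi> e = cc \<phi> f"
  obtain x y where xy: "x \<in> e" "y \<in> e" "H x y = {cc \<phi> e}" using edge_exists[OF assms(1)] by blast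
  obtain u v where uv: "u \<in> f" "v \<in> f" "H u v = {cc \<phi> e}" using edge_exists[OF assms(2)] eq by metis
  have V: "x \<in> V" "y \<in> V" "u \<in> V" "v \<in> V" using E_sub assms xy uv by auto
  have "x \<noteq> y" using xy(3) by (auto simp: hdiff_def)
  then have ex: "e = {x,y}" using edge_shape[OF assms(1)] xy(1,2) two_elem by metis
  have "u \<noteq> v" using uv(3) by (auto simp: hdiff_def)
  then have fx: "f = {u,v}" using edge_shape[OF assms(2)] uv(1,2) two_elem by metis
  have "card (H x u) + card (H y v) \<noteq> card (H x v) + card (H y u)"
    unfolding hdiff_def by (intro arith_key(2)[of "\<phi> x" "\<phi> y" "\<phi> u" "\<phi> v" "cc \<phi> e"] fin V) (use xy uv in \<open>simp_all add: hdiff_def\<close>)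
  then have "gdist V E x u + gdist V E y v \<noteq> gdist V E x v + gdist V E y u"
    using dist[OF V(1) V(3)] dist[OF V(2) V(4)] dist[OF V(1) V(4)] dist[OF V(2) V(3)] by simp
  then show "Theta V E e f" unfolding Theta_def using ex fx by blast
qed


definition cls where "cls i = {g \<in> E. cc \<phi> g = i}"
definition half where "half i u = {v \<in> V. (i \<in> \<phi> v) = (i \<in> \<phi> u)}"
definition SS where "SS e f = {i. \<forall>a\<in>e. \<forall>x\<in>f. i \<in> H a x}"

lemma classes: "Theta_classes V E = cls ` (cc \<phi> ` E)"
proof -
  let ?R = "{(e, f). e \<in> E \<and> f \<in> E \<and> Theta V E e f}"
  have Rx: "?R `` {x} = cls (cc \<phi> x)" if "x \<in> E" for x
    using that Theta_iff by (auto simp: cls_def)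
  have "Theta_classes V E = (\<Union>x\<in>E. {?R `` {x}})" unfolding Theta_classes_def quotient_def by simp
  also have "\<dots> = (\<lambda>x. cls (cc \<phi> x)) ` E" using Rx by auto
  finally show ?thesis by (simp add: image_image)
qed

lemma closer: assumes "u \<in> V" "v \<in> V" "u \<noteq> v"
  shows "\<exists>w. adj V E u w \<and> card (H w v) < card (H u v)"
proof -
  let ?P = "\<lambda>m. \<exists>xs. is_walk V E xs \<and> hd xs = u \<and> last xs = v \<and> length xs = Suc m"
  have "reachable V E u v" using conn assms by (simp add: connected_graph_def)
  then obtain xs where xs: "is_walk V E xs" "hd xs = u" "last xs = v" by (auto simp: reachable_def)
  then have "xs \<noteq> []" by (simp add: is_walk_def)
  then have "?P (length xs - 1)" using xs by (intro exI[of _ xs]) simp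
  then have "?P (gdist V E u v)" unfolding gdist_def by (rule LeastI)
  then obtain ys where ys: "is_walk V E ys" "hd ys = u" "last ys = v" "length ys = Suc (gdist V E u v)" by blast
  obtain zs where zs: "ys = u # zs" using ys by (cases ys) (auto simp: is_walk_def)
  have "zs \<noteq> []" using zs ys assms(3) by auto
  then obtain w ws where ws: "zs = w # ws" by (cases zs) auto
  have h: "u \<in> V \<and> {u,w} \<in> E \<and> is_walk V E (w#ws)" using ys(1) zs ws by (simp add: is_walk_Cons2)
  then have wV: "w \<in> V" by (simp add: is_walk_def)
  have lw: "last (w#ws) = v" using ys(3) zs ws by simp
  have "\<exists>xs. is_walk V E xs \<and> hd xs = w \<and> last xs = v \<and> length xs = Suc (length ws)"
    using h lw by (intro exI[of _ "w#ws"]) simp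
  then have "gdist V E w v \<le> length ws" unfolding gdist_def by (rule Least_le)
  moreover have "length ws < gdist V E u v" using ys(4) zs ws by simp
  ultimately have "gdist V E w v < gdist V E u v" by simp
  then have "card (H w v) < card (H u v)" using dist assms wV by simp
  moreover have "adj V E u w" using h wV by (simp add: adj_def)
  ultimately show ?thesis by blast
qed

lemma adj_pres: "(adj V (E - cls i))\<^sup>*\<^sup>* u v \<Longrightarrow> (i \<in> \<phi> u) = (i \<in> \<phi> v)"
proof (induction rule: rtranclp_induct)
  case base then show ?case by simp
next
  case (step y z)
  then have "{y,z} \<in> E" "cc \<phi> {y,z} \<noteq> i" by (auto simp: adj_def cls_def)
  then have "(i \<in> \<phi> y) = (i \<in> \<phi> z)" using edge_const by blast
  then show ?case using step.IH by simp
qed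

lemma reach_half: "u \<in> V \<Longrightarrow> v \<in> V \<Longrightarrow> (i \<in> \<phi> u) = (i \<in> \<phi> v) \<Longrightarrow> (adj V (E - cls i))\<^sup>*\<^sup>* u v"
proof (induction "card (H u v)" arbitrary: u rule: less_induct)
  case less
  show ?case
  proof (cases "u = v")
    case True then show ?thesis by simp
  next
    case False
    obtain w where w: "adj V E u w" "card (H w v) < card (H u v)" using closer[OF less.prems(1,2) False] by blast
    have wV: "w \<in> V" "{u,w} \<in> E" using w(1) by (auto simp: adj_def)
    have uw: "u \<noteq> w" using w(2) by auto
    define j where "j = cc \<phi> {u,w}"
    have Huw: "H u w = {j}" using edge_H[OF wV(2) uw] j_def by simp
    have iden: "H w v = (H u v - H u w) \<union> (H u w - H u v)" unfolding hdiff_def by blast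
    have "j \<in> H u v"
    proof (rule ccontr)
      assume "j \<notin> H u v"
      then have "H w v = insert j (H u v)" using iden Huw by auto
      then have "card (H w v) = Suc (card (H u v))" using finH[OF less.prems(1,2)] \<open>j \<notin> H u v\<close> by simp
      then show False using w(2) by simp
    qed
    moreover have "i \<notin> H u v" using less.prems(3) unfolding hdiff_def by blast
    ultimately have "j \<noteq> i" by blast
    then have "i \<notin> H u w" using Huw by simp
    then have bw: "(i \<in> \<phi> w) = (i \<in> \<phi> v)" using less.prems(3) unfolding hdiff_def by blast
    have "(adj V (E - cls i))\<^sup>*\<^sup>* w v" using less.hyps[OF w(2) wV(1) less.prems(2) bw] .
    moreover have "adj V (E - cls i) u w" using wV less.prems(1) \<open>j \<noteq> i\<close> j_def by (simp add: adj_def cls_def)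
    ultimately show ?thesis by (metis converse_rtranclp_into_rtranclp)
  qed
qed

lemma comp_half: assumes "u \<in> V" shows "{v \<in> V. reachable V (E - cls i) u v} = half i u"
proof -
  have "reachable V (E - cls i) u v \<longleftrightarrow> (i \<in> \<phi> v) = (i \<in> \<phi> u)" if "v \<in> V" for v
    using reachable_iff[of V "E - cls i" u v] adj_pres[of i u v] reach_half[OF assms that, of i] assms by auto
  then show ?thesis unfolding half_def by auto
qed

lemma components_eq: "components V (E - cls i) = {half i u | u. u \<in> V}"
  unfolding components_def using comp_half by auto

lemma half_eq: "u \<in> V \<Longrightarrow> x \<in> half i u \<longleftrightarrow> x \<in> V \<and> (i \<in> \<phi> x) = (i \<in> \<phi> u)"
  by (simp add: half_def)

lemma edge_ne: "e \<in> E \<Longrightarrow> \<exists>a. a \<in> e" using edge_shape by blast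

lemma delta_eq: assumes e: "e \<in> E" and f: "f \<in> E"
  shows "delta V E (cls i) e f = (if i \<in> SS e f then 1 else 0)"
proof -
  have "(\<exists>U\<in>components V (E - cls i). \<exists>U'\<in>components V (E - cls i).
        U \<noteq> U' \<and> e \<in> E - cls i \<and> e \<subseteq> U \<and> f \<in> E - cls i \<and> f \<subseteq> U') \<longleftrightarrow> i \<in> SS e f"
  proof
    assume "\<exists>U\<in>components V (E - cls i). \<exists>U'\<in>components V (E - cls i).
        U \<noteq> U' \<and> e \<in> E - cls i \<and> e \<subseteq> U \<and> f \<in> E - cls i \<and> f \<subseteq> U'"
    then obtain u u' where uu: "u \<in> V" "u' \<in> V" "half i u \<noteq> half i u'" "e \<subseteq> half i u" "f \<subseteq> half i u'"
      unfolding components_eq by blast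
    have "(i \<in> \<phi> u) \<noteq> (i \<in> \<phi> u')"
    proof
      assume "(i \<in> \<phi> u) = (i \<in> \<phi> u')"
      then have "half i u = half i u'" unfolding half_def by simp
      then show False using uu(3) by simp
    qed
    moreover have "\<forall>a\<in>e. (i \<in> \<phi> a) = (i \<in> \<phi> u)" using uu(4) unfolding half_def by blast
    moreover have "\<forall>x\<in>f. (i \<in> \<phi> x) = (i \<in> \<phi> u')" using uu(5) unfolding half_def by blast
    ultimately show "i \<in> SS e f" unfolding SS_def hdiff_def by blast
  next
    assume S: "i \<in> SS e f"
    obtain a where a: "a \<in> e" using edge_ne[OF e] by blast
    obtain x where x: "x \<in> f" using edge_ne[OF f] by blast
    have aV: "a \<in> V" and xV: "x \<in> V" using a x E_sub e f by auto
    have ax: "(i \<in> \<phi> a) \<noteq> (i \<in> \<phi> x)" using S a x unfolding SS_def hdiff_def by blast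
    have be: "\<forall>b\<in>e. (i \<in> \<phi> b) = (i \<in> \<phi> a)" using S x ax unfolding SS_def hdiff_def by blast
    have bf: "\<forall>y\<in>f. (i \<in> \<phi> y) = (i \<in> \<phi> x)" using S a ax unfolding SS_def hdiff_def by blast
    have ce: "cc \<phi> e \<noteq> i" using edge_const[OF e] be by auto
    have cf: "cc \<phi> f \<noteq> i" using edge_const[OF f] bf by auto
    have "e \<subseteq> half i a" using be E_sub[OF e] unfolding half_def by blast
    moreover have "f \<subseteq> half i x" using bf E_sub[OF f] unfolding half_def by blast
    moreover have "half i a \<noteq> half i x" using aV ax a unfolding half_def by blast
    moreover have "half i a \<in> components V (E - cls i)" "half i x \<in> components V (E - cls i)"
      unfolding components_eq using aV xV by blast+
    moreover have "e \<in> E - cls i" "f \<in> E - cls i" using ce cf e f by (auto simp: cls_def)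
    ultimately show "\<exists>U\<in>components V (E - cls i). \<exists>U'\<in>components V (E - cls i).
        U \<noteq> U' \<and> e \<in> E - cls i \<and> e \<subseteq> U \<and> f \<in> E - cls i \<and> f \<subseteq> U'" by blast
  qed
  then show ?thesis unfolding delta_def by simp
qed


lemma edist: assumes e: "e \<in> E" and f: "f \<in> E" shows "edge_dist V E e f = card (SS e f)"
proof -
  have eV: "e \<subseteq> V" and fV: "f \<subseteq> V" using E_sub e f by auto
  have pw: "\<And>a x. a \<in> e \<Longrightarrow> x \<in> f \<Longrightarrow> gdist V E a x = card (H a x)"
    using dist eV fV by blast
  have M: "{gdist V E a x | a x. a \<in> e \<and> x \<in> f} = {card (H a x) | a x. a \<in> e \<and> x \<in> f}"
  proof (intro Collect_cong iffI)
    fix y assume "\<exists>a x. y = gdist V E a x \<and> a \<in> e \<and> x \<in> f"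
    then obtain a x where "y = gdist V E a x" "a \<in> e" "x \<in> f" by blast
    then show "\<exists>a x. y = card (H a x) \<and> a \<in> e \<and> x \<in> f" using pw by blast
  next
    fix y assume "\<exists>a x. y = card (H a x) \<and> a \<in> e \<and> x \<in> f"
    then obtain a x where "y = card (H a x)" "a \<in> e" "x \<in> f" by blast
    then show "\<exists>a x. y = gdist V E a x \<and> a \<in> e \<and> x \<in> f" using pw by metis
  qed
  have finef: "finite e" "finite f" using finite_subset[OF eV] finite_subset[OF fV] sg by (auto simp: simple_graph_def)
  have finM: "finite {card (H a x) | a x. a \<in> e \<and> x \<in> f}"
    using finite_image_set2[of "\<lambda>a. a \<in> e" "\<lambda>x. x \<in> f" "\<lambda>a x. card (H a x)"] finef by simp
  have lb: "card (SS e f) \<le> y" if yM: "y \<in> {card (H a x) | a x. a \<in> e \<and> x \<in> f}" for y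
  proof -
    obtain a x where ax: "a \<in> e" "x \<in> f" "y = card (H a x)" using yM by blast
    have "SS e f \<subseteq> H a x" using ax unfolding SS_def by blast
    then show ?thesis using ax finH eV fV by (simp add: card_mono subset_iff)
  qed
  define j where "j = cc \<phi> e"
  define k where "k = cc \<phi> f"
  obtain a1 where a1: "a1 \<in> e" using edge_ne[OF e] by blast
  obtain x where x: "x \<in> f" "(k \<in> \<phi> x) = (k \<in> \<phi> a1)" using edge_choose[OF f] k_def by blast
  obtain a where a: "a \<in> e" "(j \<in> \<phi> a) = (j \<in> \<phi> x)" using edge_choose[OF e] j_def by blast
  have nj: "j \<notin> H a x" using a(2) unfolding hdiff_def by blast
  have nk: "k \<notin> H a x"
  proof (cases "k = j")
    case True then show ?thesis using nj by simp
  next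
    case False
    have "H a1 a \<subseteq> {j}" using edge_sub[OF e a1 a(1)] j_def by simp
    then have "k \<notin> H a1 a" using False by blast
    then have "(k \<in> \<phi> a) = (k \<in> \<phi> a1)" unfolding hdiff_def by blast
    then show ?thesis using x(2) unfolding hdiff_def by blast
  qed
  have "H a x \<subseteq> SS e f"
  proof
    fix t assume t: "t \<in> H a x"
    have tj: "t \<noteq> j" and tk: "t \<noteq> k" using t nj nk by auto
    show "t \<in> SS e f" unfolding SS_def
    proof (intro CollectI ballI)
      fix a' x' assume a': "a' \<in> e" and x': "x' \<in> f"
      have "H a a' \<subseteq> {j}" using edge_sub[OF e a(1) a'] j_def by simp
      then have "t \<notin> H a a'" using tj by blast
      moreover have "H x x' \<subseteq> {k}" using edge_sub[OF f x(1) x'] k_def by simp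
      then have "t \<notin> H x x'" using tk by blast
      ultimately show "t \<in> H a' x'" using t unfolding hdiff_def by blast
    qed
  qed
  moreover have "SS e f \<subseteq> H a x" using a(1) x(1) unfolding SS_def by blast
  ultimately have "H a x = SS e f" by blast
  then have mem: "card (SS e f) \<in> {card (H a x) | a x. a \<in> e \<and> x \<in> f}"
    using a(1) x(1) by (intro CollectI exI[of _ a] exI[of _ x]) simp
  have "Min {card (H a x) | a x. a \<in> e \<and> x \<in> f} = card (SS e f)"
    by (rule Min_eqI[OF finM lb mem])
  then show ?thesis unfolding edge_dist_def M .
qed

lemma SS_sub: assumes e: "e \<in> E" and f: "f \<in> E" shows "SS e f \<subseteq> cc \<phi> ` E"
proof
  fix t assume t: "t \<in> SS e f"
  show "t \<in> cc \<phi> ` E"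
  proof (rule ccontr)
    assume nt: "t \<notin> cc \<phi> ` E"
    then have "cls t = {}" unfolding cls_def by auto
    then have EE: "E - cls t = E" by simp
    obtain a where a: "a \<in> e" using edge_ne[OF e] by blast
    obtain x where x: "x \<in> f" using edge_ne[OF f] by blast
    have aV: "a \<in> V" and xV: "x \<in> V" using a x E_sub e f by auto
    have "reachable V E a x" using conn aV xV by (simp add: connected_graph_def)
    then have "(adj V (E - cls t))\<^sup>*\<^sup>* a x" using reachable_iff EE by metis
    then have "(t \<in> \<phi> a) = (t \<in> \<phi> x)" by (rule adj_pres)
    moreover have "t \<in> H a x" using t a x unfolding SS_def by blast
    ultimately show False unfolding hdiff_def by blast
  qed
qed

lemma main: assumes e: "e \<in> E" and f: "f \<in> E"
  shows "edge_dist V E e f = (\<Sum>F\<in>Theta_classes V E. delta V E F e f)"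
proof -
  let ?C = "cc \<phi> ` E"
  have finC: "finite ?C" using finE by simp
  have inj: "inj_on cls ?C"
  proof (rule inj_onI)
    fix i i' assume i: "i \<in> ?C" and "i' \<in> ?C" and eq: "cls i = cls i'"
    then obtain g where g: "g \<in> E" "i = cc \<phi> g" by blast
    then have "g \<in> cls i" by (simp add: cls_def)
    then have "g \<in> cls i'" using eq by simp
    then show "i = i'" using g by (simp add: cls_def)
  qed
  have "(\<Sum>F\<in>Theta_classes V E. delta V E F e f) = (\<Sum>i\<in>?C. delta V E (cls i) e f)"
    unfolding classes by (rule sum.reindex[OF inj, unfolded comp_def])
  also have "\<dots> = (\<Sum>i\<in>?C. if i \<in> SS e f then 1 else 0)" using delta_eq[OF e f] by simp
  also have "\<dots> = (\<Sum>i\<in>?C \<inter> SS e f. 1)" using sum.inter_restrict[OF finC, of "\<lambda>_. 1::nat" "SS e f"] by simp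
  also have "\<dots> = card (SS e f)" using SS_sub[OF e f] by (simp add: Int_absorb1)
  finally show ?thesis using edist[OF e f] by simp
qed

end

theorem lemma3p2:
  fixes V :: "'a set" and E :: "'a set set"
  assumes "partial_cube V E" and "connected_graph V E"
    and "e \<in> E" and "f \<in> E"
  shows "edge_dist V E e f = (\<Sum>F\<in>Theta_classes V E. delta V E F e f)"
proof -
  obtain n :: nat and \<phi> :: "'a \<Rightarrow> nat set" where sg: "simple_graph V E"
    and sub: "\<forall>v\<in>V. \<phi> v \<subseteq> {..<n}"
    and d: "\<forall>u\<in>V. \<forall>v\<in>V. gdist V E u v = card ((\<phi> u - \<phi> v) \<union> (\<phi> v - \<phi> u))"
    using assms(1) unfolding partial_cube_def by blast
  interpret pc V E \<phi>
  proof
    show "simple_graph V E" by (rule sg)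
    show "connected_graph V E" by (rule assms(2))
    show "\<And>u v. u \<in> V \<Longrightarrow> v \<in> V \<Longrightarrow> gdist V E u v = card (hdiff \<phi> u v)" using d by (simp add: hdiff_def)
    show "\<And>v. v \<in> V \<Longrightarrow> finite (\<phi> v)" using sub by (meson finite_lessThan finite_subset)
  qed
  show ?thesis by (rule main[OF assms(3,4)])
qed

end
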